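(* Let $\mathcal{A}*\mathcal{X}=\mathcal{B}$ be a consistent tensor system with unique solution $\mathcal{X}^*$, where $\mathcal{A}\in\mathbb{R}^{n_1\times n_2\times n}$, $\mathcal{B}\in\mathbb{R}^{n_1\times n_3\times n}$, $n\ge 2$, and let $2\le s<n$ with $s$ dividing $n$. Let $\alpha>0$ and $$\kappa(s)=\max_{i=1,\dots,n/s}\|\mathcal{I}-\alpha(\tilde{\mathcal{A}}^s_i)^T*\tilde{\mathcal{A}}^s_i\|_{op},\qquad \mu(s)=\max_{i,j\in\{1,\dots,n/s\},\,i\neq j}\|(\tilde{\mathcal{A}}^s_i)^T*\tilde{\mathcal{A}}^s_j\|_{op}.$$ If $\kappa(s)+\alpha\mu(s)(n/s-1)<1$, then the iterates of block cyclic frontal slice descent with block size $s$ and learning rate $\alpha$ satisfy $\lim_{t\to\infty}\mathcal{E}(t)=0$, where $\mathcal{E}(t)=\|\mathcal{X}(t)-\mathcal{X}^*\|_F^2$.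
   Context: For $\mathcal{A}\in\mathbb{R}^{n_1\times n_2\times n}$ with frontal slices $A_k=\mathcal{A}(:,:,k)$: $\mathrm{unfold}(\mathcal{A})$ stacks $A_1,\dots,A_n$ vertically, $\mathrm{fold}$ is its inverse, $\mathrm{bcirc}(\mathcal{A})$ is the $n_1n\times n_2n$ block-circulant matrix with $(p,q)$ block $A_{((p-q)\bmod n)+1}$, and $\mathcal{A}*\mathcal{X}=\mathrm{fold}(\mathrm{bcirc}(\mathcal{A})\mathrm{unfold}(\mathcal{X}))$. $\mathcal{I}$ is the identity tensor (first frontal slice the identity matrix, others zero). $\mathcal{A}^T$ transposes each frontal slice and reverses the order of slices $2,\dots,n$. $\|\cdot\|_F$ is the Frobenius norm and $\|\mathcal{C}\|_{op}=\sup_{\|\mathcal{X}\|_F=1}\|\mathcal{C}*\mathcal{X}\|_F=\|\mathrm{bcirc}(\mathcal{C})\|_2$. For $k\in\{1,\dots,n\}$, $\tilde{\mathcal{A}}_k$ has $k$-th frontal slice $A_k$ and zeros elsewhere, and $\tilde{\mathcal{A}}^s_i=\sum_{k=(i-1)s+1}^{is}\tilde{\mathcal{A}}_k$ for $i=1,\dots,n/s$. Block cyclic frontal slice descent: set $\mathcal{X}(t)=0$ for $t\le 0$; for $t=0,1,2,\dots$ let $\mathcal{R}(t+1)=\mathcal{B}-\sum_{j=0}^{n/s-1}\tilde{\mathcal{A}}^s_{((t-j)\bmod n/s)+1}*\mathcal{X}(t-j)$ and $\mathcal{X}(t+1)=\mathcal{X}(t)+\alpha(\tilde{\mathcal{A}}^s_{(t\bmod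 n/s)+1})^T*\mathcal{R}(t+1)$. *)

theory Defs
  imports "HOL-Analysis.Analysis"
begin

text \<open>Third-order real tensors are represented as functions of three natural-number
indices (row, column, frontal slice), all 0-based. The dimensions are carried explicitly;
only entries inside the index ranges are ever used.\<close>

type_synonym tensor = "nat \<Rightarrow> nat \<Rightarrow> nat \<Rightarrow> real"

text \<open>t-product of A (p x q x n) with X (q x r x n): fold(bcirc(A) unfold(X)).
Block (p',q') of bcirc(A) is slice ((p'-q') mod n), so slice k of the result is
sum over q' of A_((k-q') mod n) X_q'.\<close>
definition tprod :: "nat \<Rightarrow> nat \<Rightarrow> tensor \<Rightarrow> tensor \<Rightarrow> tensor" where
  "tprod q n A X = (\<lambda>i j k. \<Sum>l<q. \<Sum>m<n. A i l (nat ((int k - int m) mod int n)) * X l j m)"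

definition ttrans :: "nat \<Rightarrow> tensor \<Rightarrow> tensor" where
  "ttrans n A = (\<lambda>i j k. A j i ((n - k) mod n))"

definition tident :: tensor where
  "tident = (\<lambda>i j k. if i = j \<and> k = 0 then 1 else 0)"

definition tfrob :: "nat \<Rightarrow> nat \<Rightarrow> nat \<Rightarrow> tensor \<Rightarrow> real" where
  "tfrob p q n X = sqrt (\<Sum>i<p. \<Sum>j<q. \<Sum>k<n. (X i j k)\<^sup>2)"

text \<open>Operator norm of C (p x q x n): sup of ||C * X||_F over X with ||X||_F = 1
(X ranging over q x 1 x n tensors; this equals the spectral norm of bcirc(C)).\<close>
definition topnorm :: "nat \<Rightarrow> nat \<Rightarrow> nat \<Rightarrow> tensor \<Rightarrow> real" where
  "topnorm p q n C = Sup {tfrob p 1 n (tprod q n C X) | X. tfrob q 1 n X = 1}"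

text \<open>Block-slice tensor: keeps frontal slices i*s, ..., i*s+s-1 (0-based block index i,
corresponding to the paper's block i+1) and zeros elsewhere.\<close>
definition blockslice :: "nat \<Rightarrow> tensor \<Rightarrow> nat \<Rightarrow> tensor" where
  "blockslice s A i = (\<lambda>a b k. if i * s \<le> k \<and> k < i * s + s then A a b k else 0)"

definition kappa :: "nat \<Rightarrow> nat \<Rightarrow> nat \<Rightarrow> nat \<Rightarrow> real \<Rightarrow> tensor \<Rightarrow> real" where
  "kappa n1 n2 n s \<alpha> A = Max ((\<lambda>i. topnorm n2 n2 n
      (\<lambda>a b k. tident a b k - \<alpha> * tprod n1 n (ttrans n (blockslice s A i)) (blockslice s A i) a b k))
      ` {..<n div s})"

definition mu :: "nat \<Rightarrow> nat \<Rightarrow> nat \<Rightarrow> nat \<Rightarrow> tensor \<Rightarrow> real" where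
  "mu n1 n2 n s A = Max {topnorm n2 n2 n (tprod n1 n (ttrans n (blockslice s A i)) (blockslice s A j))
      | i j. i < n div s \<and> j < n div s \<and> i \<noteq> j}"

text \<open>Block cyclic frontal slice descent. Iterate index t is the paper's X(t), with X(0)=0
(and X(t)=0 for t<0 handled by the guard j \<le> t). Block index (t-j) mod (n/s) is 0-based.\<close>
fun bcfsd :: "nat \<Rightarrow> nat \<Rightarrow> nat \<Rightarrow> nat \<Rightarrow> real \<Rightarrow> tensor \<Rightarrow> tensor \<Rightarrow> nat \<Rightarrow> tensor" where
  "bcfsd n1 n2 n s \<alpha> A B 0 = (\<lambda>i j k. 0)"
| "bcfsd n1 n2 n s \<alpha> A B (Suc t) =
     (let R = (\<lambda>a b k. B a b k - (\<Sum>j<n div s. if j \<le> t then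
                 tprod n2 n (blockslice s A (nat ((int t - int j) mod int (n div s))))
                    (bcfsd n1 n2 n s \<alpha> A B (t - j)) a b k else 0))
      in (\<lambda>a b k. bcfsd n1 n2 n s \<alpha> A B t a b k +
            \<alpha> * tprod n1 n (ttrans n (blockslice s A (t mod (n div s)))) R a b k))"

end

theory Submission
  imports Defs
begin

lemma div_minus_le:
  fixes t j m :: nat assumes "0 < m" "j < m"
  shows "Suc t div m - 1 \<le> (t - j) div m"
proof -
  let ?r = "Suc t div m"
  have "?r * m \<le> Suc t" using div_times_less_eq_dividend by (metis mult.commute)
  then have "(?r - 1) * m \<le> t - j"
  proof (cases "?r = 0")
    case False
    then have "(?r - 1) * m + m \<le> Suc t" using \<open>?r * m \<le> Suc t\<close>
      by (metis One_nat_def Suc_pred add.commute bot_nat_0.not_eq_extremum mult_Suc)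
    then show ?thesis using assms by linarith
  qed simp
  then show ?thesis using assms less_eq_div_iff_mult_less_eq by blast
qed

lemma decay_bound:
  fixes e :: "nat \<Rightarrow> real" and a b :: real and m :: nat
  assumes nn: "\<And>t. 0 \<le> e t"
    and rec: "\<And>t. e (Suc t) \<le> a * e t + b * (\<Sum>j\<in>{1..<m}. e (t - j))"
    and a0: "0 \<le> a" and b0: "0 \<le> b" and q1: "a + b * (real m - 1) < 1" and m0: "0 < m"
  shows "e t \<le> e 0 * (a + b * (real m - 1)) ^ (t div m)"
proof (induction t rule: less_induct)
  case (less t)
  define q where "q = a + b * (real m - 1)"
  have q0: "0 \<le> q" using a0 b0 m0 unfolding q_def by auto
  have qq1: "q \<le> 1" using q1 q_def by simp
  show ?case
  proof (cases t)
    case 0 then show ?thesis by simp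
  next
    case (Suc t')
    let ?r = "Suc t' div m"
    have bnd: "e (t' - j) \<le> e 0 * q ^ (?r - 1)" if "j < m" for j
    proof -
      have "t' - j < t" using Suc by simp
      then have "e (t' - j) \<le> e 0 * q ^ ((t' - j) div m)" using less q_def by simp
      also have "\<dots> \<le> e 0 * q ^ (?r - 1)"
        using div_minus_le[OF m0 that, of t'] q0 qq1 nn[of 0]
        by (intro mult_left_mono power_decreasing) auto
      finally show ?thesis .
    qed
    have "e t \<le> a * e t' + b * (\<Sum>j\<in>{1..<m}. e (t' - j))" using rec Suc by simp
    also have "\<dots> \<le> a * (e 0 * q ^ (?r - 1)) + b * (\<Sum>j\<in>{1..<m}. e 0 * q ^ (?r - 1))"
      using bnd[of 0] m0 bnd a0 b0
      by (intro add_mono mult_left_mono sum_mono) auto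
    also have "\<dots> = q * (e 0 * q ^ (?r - 1))"
      using m0 by (simp add: q_def algebra_simps of_nat_diff)
    also have "\<dots> \<le> e 0 * q ^ ?r"
    proof (cases "?r = 0")
      case True then show ?thesis using qq1 nn[of 0] q0 by (simp add: mult_left_le_one_le)
    next
      case False
      then have "q * q ^ (?r - 1) = q ^ ?r" by (metis power_eq_if)
      then have "q * (e 0 * q ^ (?r - 1)) = e 0 * q ^ ?r" by (metis mult.left_commute)
      then show ?thesis by (rule eq_refl)
    qed
    finally show ?thesis using Suc q_def by simp
  qed
qed

lemma decay:
  fixes e :: "nat \<Rightarrow> real" and a b :: real and m :: nat
  assumes nn: "\<And>t. 0 \<le> e t"
    and rec: "\<And>t. e (Suc t) \<le> a * e t + b * (\<Sum>j\<in>{1..<m}. e (t - j))"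
    and a0: "0 \<le> a" and b0: "0 \<le> b" and q1: "a + b * (real m - 1) < 1" and m0: "0 < m"
  shows "e \<longlonglongrightarrow> 0"
proof -
  define q where "q = a + b * (real m - 1)"
  have q0: "0 \<le> q" using a0 b0 m0 unfolding q_def by auto
  have "(\<lambda>k. q ^ k) \<longlonglongrightarrow> 0" using q0 q1 q_def by (intro LIMSEQ_power_zero) auto
  moreover have "filterlim (\<lambda>t. t div m) sequentially sequentially"
    unfolding filterlim_at_top
  proof
    fix Z show "eventually (\<lambda>t. Z \<le> t div m) sequentially"
      using m0 by (intro eventually_sequentiallyI[of "Z * m"]) (simp add: less_eq_div_iff_mult_less_eq)
  qed
  ultimately have "(\<lambda>t. q ^ (t div m)) \<longlonglongrightarrow> 0" by (rule filterlim_compose)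
  then have "(\<lambda>t. e 0 * q ^ (t div m)) \<longlonglongrightarrow> 0" by (metis mult_zero_right tendsto_mult_left)
  then show ?thesis
    using decay_bound[OF assms] nn q_def
    by (intro tendsto_sandwich[of "\<lambda>_. 0" e sequentially "\<lambda>t. e 0 * q ^ (t div m)"]) auto
qed

lemma tfrob_L2: "tfrob p q n X = L2_set (\<lambda>(i,j,k). X i j k) ({..<p} \<times> {..<q} \<times> {..<n})"
  unfolding tfrob_def L2_set_def
  by (simp add: sum.cartesian_product case_prod_beta)

lemma tfrob_nonneg: "0 \<le> tfrob p q n X"
  unfolding tfrob_L2 by simp

lemma tfrob_cong:
  assumes "\<And>i j k. i < p \<Longrightarrow> j < q \<Longrightarrow> k < n \<Longrightarrow> X i j k = Y i j k"
  shows "tfrob p q n X = tfrob p q n Y"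
  unfolding tfrob_def using assms by (intro arg_cong[where f=sqrt] sum.cong) auto

lemma tfrob_add: "tfrob p q n (\<lambda>i j k. X i j k + Y i j k) \<le> tfrob p q n X + tfrob p q n Y"
proof -
  have e: "(\<lambda>(i,j,k). X i j k + Y i j k) = (\<lambda>x. (\<lambda>(i,j,k). X i j k) x + (\<lambda>(i,j,k). Y i j k) x)"
    by auto
  show ?thesis unfolding tfrob_L2 e by (rule L2_set_triangle_ineq)
qed

lemma tfrob_scale: "tfrob p q n (\<lambda>i j k. c * X i j k) = \<bar>c\<bar> * tfrob p q n X"
proof -
  have "(\<Sum>i<p. \<Sum>j<q. \<Sum>k<n. (c * X i j k)\<^sup>2) = c\<^sup>2 * (\<Sum>i<p. \<Sum>j<q. \<Sum>k<n. (X i j k)\<^sup>2)"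
    by (simp add: power_mult_distrib sum_distrib_left)
  moreover have "sqrt (c\<^sup>2 * (\<Sum>i<p. \<Sum>j<q. \<Sum>k<n. (X i j k)\<^sup>2)) = \<bar>c\<bar> * sqrt (\<Sum>i<p. \<Sum>j<q. \<Sum>k<n. (X i j k)\<^sup>2)"
    by (simp add: real_sqrt_mult)
  ultimately show ?thesis unfolding tfrob_def by metis
qed

lemma tfrob_diff: "tfrob p q n (\<lambda>i j k. X i j k - Y i j k) \<le> tfrob p q n X + tfrob p q n Y"
proof -
  have "tfrob p q n (\<lambda>i j k. X i j k - Y i j k) = tfrob p q n (\<lambda>i j k. X i j k + (-1) * Y i j k)"
    by simp
  also have "\<dots> \<le> tfrob p q n X + tfrob p q n (\<lambda>i j k. (-1) * Y i j k)" by (rule tfrob_add)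
  also have "\<dots> = tfrob p q n X + tfrob p q n Y" by (simp only: tfrob_scale)
  finally show ?thesis .
qed

lemma tfrob_sum:
  assumes "finite J"
  shows "tfrob p q n (\<lambda>i j k. \<Sum>l\<in>J. F l i j k) \<le> (\<Sum>l\<in>J. tfrob p q n (F l))"
  using assms
proof (induction J rule: finite_induct)
  case empty
  then show ?case by (simp add: tfrob_def)
next
  case (insert x J)
  have "tfrob p q n (\<lambda>i j k. \<Sum>l\<in>insert x J. F l i j k)
      = tfrob p q n (\<lambda>i j k. F x i j k + (\<Sum>l\<in>J. F l i j k))" using insert by simp
  also have "\<dots> \<le> tfrob p q n (F x) + tfrob p q n (\<lambda>i j k. \<Sum>l\<in>J. F l i j k)"
    by (rule tfrob_add)
  finally show ?case using insert by simp
qed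

lemma tfrob_entry:
  assumes "i < p" "j < q" "k < n"
  shows "\<bar>X i j k\<bar> \<le> tfrob p q n X"
proof -
  have "\<bar>X i j k\<bar> = (\<lambda>(i,j,k). \<bar>X i j k\<bar>) (i,j,k)" by simp
  also have "\<dots> \<le> L2_set (\<lambda>(i,j,k). \<bar>X i j k\<bar>) ({..<p} \<times> {..<q} \<times> {..<n})"
    using assms by (intro member_le_L2_set) auto
  also have "\<dots> = tfrob p q n X" unfolding tfrob_L2 L2_set_def
    by (simp add: case_prod_beta)
  finally show ?thesis .
qed

lemma tfrob_cols:
  "(tfrob p r n Z)\<^sup>2 = (\<Sum>j<r. (tfrob p 1 n (\<lambda>i _ k. Z i j k))\<^sup>2)"
proof -
  have "(tfrob p r n Z)\<^sup>2 = (\<Sum>i<p. \<Sum>j<r. \<Sum>k<n. (Z i j k)\<^sup>2)"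
    unfolding tfrob_def by (simp add: sum_nonneg)
  also have "\<dots> = (\<Sum>j<r. \<Sum>i<p. \<Sum>k<n. (Z i j k)\<^sup>2)" by (rule sum.swap)
  also have "\<dots> = (\<Sum>j<r. (tfrob p 1 n (\<lambda>i _ k. Z i j k))\<^sup>2)"
    unfolding tfrob_def by (simp add: sum_nonneg)
  finally show ?thesis .
qed

lemma cyc_lt: "0 < n \<Longrightarrow> nat ((int k - int m) mod int n) < n"
  by (simp add: nat_less_iff)

lemma cyc_zero: "k < n \<Longrightarrow> m < n \<Longrightarrow> (nat ((int k - int m) mod int n) = 0) = (m = k)"
proof -
  assume a: "k < n" "m < n"
  show ?thesis
  proof (cases "m \<le> k")
    case True
    then have "(int k - int m) mod int n = int k - int m"
      using a by (intro mod_pos_pos_trivial) auto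
    then show ?thesis using True by auto
  next
    case False
    have "(int k - int m) mod int n = (int k - int m + int n) mod int n" by simp
    also have "\<dots> = int k - int m + int n"
      using a False by (intro mod_pos_pos_trivial) auto
    finally show ?thesis using False a by auto
  qed
qed

lemma cyc_int: "0 < n \<Longrightarrow> int (nat ((int k - int m) mod int n)) = (int k - int m) mod int n"
  by simp

lemma cyc_comp:
  assumes "0 < n"
  shows "nat ((int k - int ((u + m') mod n)) mod int n)
       = nat ((int (nat ((int k - int m') mod int n)) - int u) mod int n)"
proof -
  have "(int k - int ((u + m') mod n)) mod int n = (int k - (int u + int m') mod int n) mod int n"
    by (simp add: zmod_int)
  also have "\<dots> = (int k - (int u + int m')) mod int n" by (simp add: mod_diff_right_eq)
  also have "\<dots> = ((int k - int m') mod int n - int u) mod int n" by (simp add: mod_diff_left_eq algebra_simps)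
  finally show ?thesis using assms by simp
qed

lemma inner_shift:
  assumes n: "0 < n" and m': "m' < n"
  shows "(\<Sum>m<n. f (nat ((int k - int m) mod int n)) * g (nat ((int m - int m') mod int n)))
       = (\<Sum>u<n. f (nat ((int (nat ((int k - int m') mod int n)) - int u) mod int n)) * g u)"
proof (rule sum.reindex_bij_witness[where j = "\<lambda>m. nat ((int m - int m') mod int n)"
                                        and i = "\<lambda>u. (u + m') mod n"])
  fix a assume a: "a \<in> {..<n}"
  have "int ((nat ((int a - int m') mod int n) + m') mod n) = ((int a - int m') mod int n + int m') mod int n"
    using n by (simp add: zmod_int)
  also have "\<dots> = int a mod int n" by (simp add: mod_add_left_eq)
  also have "\<dots> = int a" using a by simp
  finally show "(nat ((int a - int m') mod int n) + m') mod n = a" by simp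
  show "nat ((int a - int m') mod int n) \<in> {..<n}" using n by (simp add: cyc_lt)
  show "f (nat ((int (nat ((int k - int m') mod int n)) - int (nat ((int a - int m') mod int n))) mod int n)) *
          g (nat ((int a - int m') mod int n)) =
        f (nat ((int k - int a) mod int n)) * g (nat ((int a - int m') mod int n))"
  proof -
    have "((int k - int m') mod int n - (int a - int m') mod int n) mod int n = (int k - int a) mod int n"
      unfolding mod_diff_eq by simp
    then show ?thesis using n by simp
  qed
next
  fix b assume b: "b \<in> {..<n}"
  have "(int ((b + m') mod n) - int m') mod int n = ((int b + int m') mod int n - int m') mod int n"
    by (simp add: zmod_int)
  also have "\<dots> = int b mod int n" by (simp add: mod_diff_left_eq)
  also have "\<dots> = int b" using b by simp
  finally show "nat ((int ((b + m') mod n) - int m') mod int n) = b" by simp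
  show "(b + m') mod n \<in> {..<n}" using n by simp
qed

lemma tprod_cong2:
  assumes "\<And>l m. l < q \<Longrightarrow> m < n \<Longrightarrow> X l j m = Y l j m"
  shows "tprod q n C X i j k = tprod q n C Y i j k"
  unfolding tprod_def using assms by (intro sum.cong refl) auto

lemma tprod_zero2: "tprod q n C (\<lambda>i j k. 0) = (\<lambda>i j k. 0)"
  unfolding tprod_def by simp

lemma tprod_diff2:
  "tprod q n C (\<lambda>a b c. X a b c - Y a b c) i j k = tprod q n C X i j k - tprod q n C Y i j k"
  unfolding tprod_def by (simp add: algebra_simps sum_subtractf)

lemma tprod_scale2:
  "tprod q n C (\<lambda>a b c. r * X a b c) i j k = r * tprod q n C X i j k"
  unfolding tprod_def by (simp add: algebra_simps sum_distrib_left)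

lemma tprod_sum2:
  "tprod q n C (\<lambda>a b c. \<Sum>l\<in>J. F l a b c) i j k = (\<Sum>l\<in>J. tprod q n C (F l) i j k)"
  unfolding tprod_def by (simp add: sum_distrib_left sum.swap[of _ J])

lemma tprod_sum1:
  "tprod q n (\<lambda>a b c. \<Sum>l\<in>J. F l a b c) X i j k = (\<Sum>l\<in>J. tprod q n (F l) X i j k)"
  unfolding tprod_def by (simp add: sum_distrib_right sum.swap[of _ J])

lemma tprod_diff1:
  "tprod q n (\<lambda>a b c. F a b c - r * G a b c) X i j k = tprod q n F X i j k - r * tprod q n G X i j k"
  unfolding tprod_def by (simp add: algebra_simps sum_subtractf sum_distrib_left)

lemma tprod_ident:
  assumes "i < q" "k < n"
  shows "tprod q n tident E i j k = E i j k"
proof -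
  have "tprod q n tident E i j k = (\<Sum>l<q. (\<Sum>m<n. (if l = i \<and> m = k then E l j m else 0)))"
    unfolding tprod_def
  proof (intro sum.cong refl)
    fix l m assume "m \<in> {..<n}"
    then have c: "(nat ((int k - int m) mod int n) = 0) = (m = k)" using assms by (intro cyc_zero) auto
    show "tident i l (nat ((int k - int m) mod int n)) * E l j m = (if l = i \<and> m = k then E l j m else 0)"
      unfolding tident_def c by auto
  qed
  also have "\<dots> = (\<Sum>l<q. (if l = i then E l j k else 0))"
  proof (rule sum.cong[OF refl])
    fix l show "(\<Sum>m<n. (if l = i \<and> m = k then E l j m else 0)) = (if l = i then E l j k else 0)"
      using assms by (cases "l = i") auto
  qed
  also have "\<dots> = E i j k" using assms by simp
  finally show ?thesis .
qed

lemma tprod_assoc: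
  assumes n: "0 < n"
  shows "tprod p n T (tprod q n A E) i j k = tprod q n (tprod p n T A) E i j k"
proof -
  define d where "d a b = nat ((int a - int b) mod int n)" for a b
  define F where "F l l' m' m = T i l (d k m) * A l l' (d m m') * E l' j m'" for l l' m' m
  have "tprod p n T (tprod q n A E) i j k
      = (\<Sum>l<p. \<Sum>m<n. \<Sum>l'<q. \<Sum>m'<n. F l l' m' m)"
    unfolding tprod_def F_def d_def by (simp add: sum_distrib_left mult.assoc)
  also have "\<dots> = (\<Sum>l<p. \<Sum>l'<q. \<Sum>m'<n. \<Sum>m<n. F l l' m' m)"
  proof (rule sum.cong[OF refl])
    fix l
    have "(\<Sum>m<n. \<Sum>l'<q. \<Sum>m'<n. F l l' m' m) = (\<Sum>l'<q. \<Sum>m<n. \<Sum>m'<n. F l l' m' m)"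
      by (rule sum.swap)
    also have "\<dots> = (\<Sum>l'<q. \<Sum>m'<n. \<Sum>m<n. F l l' m' m)"
      by (rule sum.cong[OF refl], rule sum.swap)
    finally show "(\<Sum>m<n. \<Sum>l'<q. \<Sum>m'<n. F l l' m' m) = (\<Sum>l'<q. \<Sum>m'<n. \<Sum>m<n. F l l' m' m)" .
  qed
  also have "\<dots> = (\<Sum>l'<q. \<Sum>l<p. \<Sum>m'<n. \<Sum>m<n. F l l' m' m)" by (rule sum.swap)
  also have "\<dots> = (\<Sum>l'<q. \<Sum>m'<n. \<Sum>l<p. \<Sum>m<n. F l l' m' m)"
    by (rule sum.cong[OF refl], rule sum.swap)
  also have "\<dots> = (\<Sum>l'<q. \<Sum>m'<n. (\<Sum>l<p. \<Sum>u<n. T i l (d (d k m') u) * A l l' u) * E l' j m')"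
  proof (intro sum.cong refl)
    fix l' m' assume m'': "m' \<in> {..<n}"
    then have m': "m' < n" by simp
    have "(\<Sum>m<n. F l l' m' m) = (\<Sum>u<n. T i l (d (d k m') u) * A l l' u) * E l' j m'" for l
    proof -
      have "(\<Sum>m<n. F l l' m' m) = (\<Sum>m<n. T i l (d k m) * A l l' (d m m')) * E l' j m'"
        unfolding F_def by (simp add: sum_distrib_right)
      also have "\<dots> = (\<Sum>u<n. T i l (d (d k m') u) * A l l' u) * E l' j m'"
        unfolding d_def using inner_shift[OF n m', where f="T i l" and g="A l l'" and k=k] by simp
      finally show ?thesis .
    qed
    then show "(\<Sum>l<p. \<Sum>m<n. F l l' m' m) = (\<Sum>l<p. \<Sum>u<n. T i l (d (d k m') u) * A l l' u) * E l' j m'"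
      by (simp add: sum_distrib_right)
  qed
  also have "\<dots> = tprod q n (tprod p n T A) E i j k"
    unfolding tprod_def d_def by simp
  finally show ?thesis .
qed

lemma tfrob_le_l1: "tfrob p q n Z \<le> (\<Sum>i<p. \<Sum>j<q. \<Sum>k<n. \<bar>Z i j k\<bar>)"
proof -
  have "tfrob p q n Z \<le> (\<Sum>x\<in>{..<p} \<times> {..<q} \<times> {..<n}. \<bar>(\<lambda>(i,j,k). Z i j k) x\<bar>)"
    unfolding tfrob_L2 by (rule L2_set_le_sum_abs)
  also have "\<dots> = (\<Sum>i<p. \<Sum>j<q. \<Sum>k<n. \<bar>Z i j k\<bar>)"
    by (simp add: sum.cartesian_product case_prod_beta)
  finally show ?thesis .
qed

lemma topnorm_bdd: "bdd_above {tfrob p 1 n (tprod q n C X) | X. tfrob q 1 n X = 1}"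
proof -
  define K where "K = (\<Sum>i<p. \<Sum>k<n. \<Sum>l<q. \<Sum>m<n. \<bar>C i l (nat ((int k - int m) mod int n))\<bar>)"
  have "tfrob p 1 n (tprod q n C X) \<le> K" if X1: "tfrob q 1 n X = 1" for X
  proof -
    have e: "\<bar>tprod q n C X i 0 k\<bar> \<le> (\<Sum>l<q. \<Sum>m<n. \<bar>C i l (nat ((int k - int m) mod int n))\<bar>)" for i k
    proof -
      have "\<bar>tprod q n C X i 0 k\<bar> \<le> (\<Sum>l<q. \<Sum>m<n. \<bar>C i l (nat ((int k - int m) mod int n)) * X l 0 m\<bar>)"
        unfolding tprod_def by (rule order_trans[OF sum_abs sum_mono], rule sum_abs)
      also have "\<dots> \<le> (\<Sum>l<q. \<Sum>m<n. \<bar>C i l (nat ((int k - int m) mod int n))\<bar>)"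
      proof (intro sum_mono)
        fix l m assume "l \<in> {..<q}" "m \<in> {..<n}"
        then have "\<bar>X l 0 m\<bar> \<le> 1" using tfrob_entry[of l q 0 1 m n X] X1 by simp
        then show "\<bar>C i l (nat ((int k - int m) mod int n)) * X l 0 m\<bar> \<le> \<bar>C i l (nat ((int k - int m) mod int n))\<bar>"
          by (simp add: abs_mult mult_left_le)
      qed
      finally show ?thesis .
    qed
    have "tfrob p 1 n (tprod q n C X) \<le> (\<Sum>i<p. \<Sum>j<1. \<Sum>k<n. \<bar>tprod q n C X i j k\<bar>)"
      by (rule tfrob_le_l1)
    also have "\<dots> = (\<Sum>i<p. \<Sum>k<n. \<bar>tprod q n C X i 0 k\<bar>)" by simp
    also have "\<dots> \<le> K" unfolding K_def using e by (intro sum_mono) auto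
    finally show ?thesis .
  qed
  then show ?thesis unfolding bdd_above_def by blast
qed

lemma col_bound:
  assumes "0 \<le> topnorm p q n C"
  shows "tfrob p 1 n (tprod q n C Y) \<le> topnorm p q n C * tfrob q 1 n Y"
proof (cases "tfrob q 1 n Y = 0")
  case True
  have "Y l 0 m = 0" if "l < q" "m < n" for l m
    using tfrob_entry[of l q 0 1 m n Y] that True by simp
  then have "tfrob p 1 n (tprod q n C Y) = tfrob p 1 n (tprod q n C (\<lambda>i j k. 0))"
    by (intro tfrob_cong tprod_cong2) auto
  then show ?thesis using True by (simp add: tprod_zero2 tfrob_def)
next
  case False
  define f where "f = tfrob q 1 n Y"
  have f0: "0 < f" using False tfrob_nonneg f_def by (metis order_le_less)
  define Y' where "Y' = (\<lambda>i j k. (1 / f) * Y i j k)"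
  have "tfrob q 1 n Y' = 1" unfolding Y'_def tfrob_scale f_def[symmetric] using f0 by simp
  then have "tfrob p 1 n (tprod q n C Y') \<le> topnorm p q n C"
    unfolding topnorm_def by (intro cSup_upper topnorm_bdd) blast
  moreover have "tfrob p 1 n (tprod q n C Y') = (1 / f) * tfrob p 1 n (tprod q n C Y)"
  proof -
    have tY: "tprod q n C Y' = (\<lambda>i j k. (1 / f) * tprod q n C Y i j k)"
      unfolding Y'_def by (intro ext tprod_scale2)
    show ?thesis unfolding tY tfrob_scale using f0 by simp
  qed
  ultimately have "(1 / f) * tfrob p 1 n (tprod q n C Y) \<le> topnorm p q n C" by simp
  then show ?thesis using f0 unfolding f_def[symmetric] by (simp add: field_simps)
qed

lemma op_bound:
  assumes N: "0 \<le> topnorm p q n C"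
  shows "tfrob p r n (tprod q n C X) \<le> topnorm p q n C * tfrob q r n X"
proof -
  let ?N = "topnorm p q n C"
  have col: "(\<lambda>i (_::nat) k. tprod q n C X i j k) = tprod q n C (\<lambda>i _ k. X i j k)" for j
    unfolding tprod_def by simp
  have "(tfrob p r n (tprod q n C X))\<^sup>2 = (\<Sum>j<r. (tfrob p 1 n (\<lambda>i _ k. tprod q n C X i j k))\<^sup>2)"
    by (rule tfrob_cols)
  also have "\<dots> \<le> (\<Sum>j<r. (?N * tfrob q 1 n (\<lambda>i _ k. X i j k))\<^sup>2)"
    unfolding col using col_bound[OF N] by (intro sum_mono power_mono) (auto simp: tfrob_nonneg)
  also have "\<dots> = ?N\<^sup>2 * (tfrob q r n X)\<^sup>2"
    by (simp add: tfrob_cols[of q r n X] power_mult_distrib sum_distrib_left)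
  also have "\<dots> = (?N * tfrob q r n X)\<^sup>2" by (simp add: power_mult_distrib)
  finally show ?thesis using N tfrob_nonneg
    by (meson mult_nonneg_nonneg power2_le_imp_le)
qed

lemma topnorm_nonneg:
  assumes "0 < q" "0 < n"
  shows "0 \<le> topnorm p q n C"
proof -
  define Y where "Y = (\<lambda>(l::nat) (j::nat) (m::nat). if l = 0 \<and> m = 0 then (1::real) else 0)"
  have "(\<Sum>i<q. \<Sum>j<1. \<Sum>k<n. (Y i j k)\<^sup>2) = (\<Sum>i<q. if i = 0 then 1 else 0)"
  proof (rule sum.cong[OF refl])
    fix i show "(\<Sum>j<1. \<Sum>k<n. (Y i j k)\<^sup>2) = (if i = 0 then 1 else 0)"
      unfolding Y_def using assms by (cases "i = 0") (auto simp: if_distrib[where f="\<lambda>x. x\<^sup>2"] cong: if_cong)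
  qed
  also have "\<dots> = 1" using assms by simp
  finally have "tfrob q 1 n Y = 1" unfolding tfrob_def by simp
  then have "tfrob p 1 n (tprod q n C Y) \<le> topnorm p q n C"
    unfolding topnorm_def by (intro cSup_upper topnorm_bdd) blast
  then show ?thesis using tfrob_nonneg order_trans by blast
qed

lemma blk_cond:
  fixes s i k :: nat assumes "0 < s"
  shows "(i * s \<le> k \<and> k < i * s + s) = (i = k div s)"
proof
  assume a: "i * s \<le> k \<and> k < i * s + s"
  then have "i \<le> k div s" using assms less_eq_div_iff_mult_less_eq by blast
  moreover have "k div s < Suc i" using a assms by (simp add: div_less_iff_less_mult)
  ultimately show "i = k div s" by simp
next
  assume ik: "i = k div s"
  moreover have "k div s * s + k mod s = k" by simp
  moreover have "k mod s < s" using assms by simp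
  ultimately show "i * s \<le> k \<and> k < i * s + s" unfolding ik by linarith
qed

lemma blk_sum:
  assumes "0 < s" "k < m * s"
  shows "(\<Sum>i<m. blockslice s A i a b k) = A a b k"
proof -
  have "(\<Sum>i<m. blockslice s A i a b k) = (\<Sum>i<m. if i = k div s then A a b k else 0)"
    unfolding blockslice_def using blk_cond[OF assms(1)] by (intro sum.cong refl) auto
  also have "\<dots> = A a b k" using assms by (simp add: div_less_iff_less_mult)
  finally show ?thesis .
qed

lemma tprod_blk:
  assumes "0 < s" "n = m * s" "0 < n"
  shows "tprod q n A X i j k = (\<Sum>b<m. tprod q n (blockslice s A b) X i j k)"
proof -
  have "tprod q n A X i j k = tprod q n (\<lambda>a b c. \<Sum>i<m. blockslice s A i a b c) X i j k"
    unfolding tprod_def using assms blk_sum[OF assms(1)] cyc_lt[OF assms(3)]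
    by (intro sum.cong refl) simp
  then show ?thesis by (simp add: tprod_sum1)
qed

lemma perm_sum:
  assumes "0 < m"
  shows "(\<Sum>j<m. f (nat ((int t - int j) mod int m))) = (\<Sum>i<m. f i)"
proof (rule sum.reindex_bij_witness[where j = "\<lambda>j. nat ((int t - int j) mod int m)"
                                        and i = "\<lambda>j. nat ((int t - int j) mod int m)"])
  fix a assume a: "a \<in> {..<m}"
  have "(int t - int (nat ((int t - int a) mod int m))) mod int m = (int t - (int t - int a) mod int m) mod int m"
    using assms by simp
  also have "\<dots> = (int t - (int t - int a)) mod int m" by (simp add: mod_diff_right_eq)
  also have "\<dots> = int a" using a by simp
  finally show "nat ((int t - int (nat ((int t - int a) mod int m))) mod int m) = a" by simp
  show "nat ((int t - int a) mod int m) \<in> {..<m}" using assms by (simp add: cyc_lt)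
  show "f (nat ((int t - int a) mod int m)) = f (nat ((int t - int a) mod int m))" by simp
next
  fix b assume b: "b \<in> {..<m}"
  have "(int t - int (nat ((int t - int b) mod int m))) mod int m = (int t - (int t - int b) mod int m) mod int m"
    using assms by simp
  also have "\<dots> = (int t - (int t - int b)) mod int m" by (simp add: mod_diff_right_eq)
  also have "\<dots> = int b" using b by simp
  finally show "nat ((int t - int (nat ((int t - int b) mod int m))) mod int m) = b" by simp
  show "nat ((int t - int b) mod int m) \<in> {..<m}" using assms by (simp add: cyc_lt)
qed

lemma sg_ne:
  assumes "0 < j" "j < m"
  shows "nat ((int t - int j) mod int m) \<noteq> t mod m"
proof
  assume "nat ((int t - int j) mod int m) = t mod m"
  then have "(int t - int j) mod int m = int t mod int m" using assms by (simp add: zmod_int nat_eq_iff)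
  then have "int m dvd (int t - int j - int t)" by (rule mod_eq_dvd_iff[THEN iffD1])
  moreover have "int t - int j - int t = - int j" by simp
  ultimately have "int m dvd int j" by (metis dvd_minus_iff)
  then have "m dvd j" by simp
  then show False using assms by (simp add: nat_dvd_not_less)
qed

theorem corollary3:
  fixes n1 n2 n3 n s :: nat and \<alpha> :: real and A B Xs :: tensor
  assumes "n \<ge> 2" and "2 \<le> s" and "s < n" and "s dvd n"
    and sol: "\<forall>i<n1. \<forall>j<n3. \<forall>k<n. tprod n2 n A Xs i j k = B i j k"
    and uniq: "\<forall>X. (\<forall>i<n1. \<forall>j<n3. \<forall>k<n. tprod n2 n A X i j k = B i j k) \<longrightarrow>
                 (\<forall>i<n2. \<forall>j<n3. \<forall>k<n. X i j k = Xs i j k)"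
    and "\<alpha> > 0"
    and "kappa n1 n2 n s \<alpha> A + \<alpha> * mu n1 n2 n s A * (real (n div s) - 1) < 1"
  shows "(\<lambda>t. (tfrob n2 n3 n (\<lambda>i j k. bcfsd n1 n2 n s \<alpha> A B t i j k - Xs i j k))\<^sup>2)
           \<longlonglongrightarrow> 0"
proof (cases "n2 = 0")
  case True
  then show ?thesis by (simp add: tfrob_def)
next
  case False
  then have n2: "0 < n2" by simp
  define m where "m = n div s"
  have s0: "0 < s" and n0: "0 < n" using assms by auto
  have nm: "n = m * s" using assms(4) unfolding m_def by simp
  have m2: "2 \<le> m"
  proof -
    have "m \<noteq> 0" using nm n0 by auto
    moreover have "m \<noteq> 1" using nm assms(3) by auto
    ultimately show ?thesis by linarith
  qed
  have m0: "0 < m" using m2 by simp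
  define X where "X = bcfsd n1 n2 n s \<alpha> A B"
  define E where "E t = (\<lambda>i j k. X t i j k - Xs i j k)" for t
  define e where "e t = tfrob n2 n3 n (E t)" for t
  define \<kappa> where "\<kappa> = kappa n1 n2 n s \<alpha> A"
  define \<mu> where "\<mu> = mu n1 n2 n s A"
  define M0 where "M0 c = (\<lambda>a b k. tident a b k - \<alpha> * tprod n1 n (ttrans n (blockslice s A c)) (blockslice s A c) a b k)" for c
  define MM where "MM c x = tprod n1 n (ttrans n (blockslice s A c)) (blockslice s A x)" for c x
  have kap: "topnorm n2 n2 n (M0 c) \<le> \<kappa>" if "c < m" for c
    unfolding \<kappa>_def kappa_def M0_def using that m_def by (intro Max_ge) auto
  have mub: "topnorm n2 n2 n (MM c x) \<le> \<mu>" if "c < m" "x < m" "c \<noteq> x" for c x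
  proof -
    let ?f = "\<lambda>i j. topnorm n2 n2 n (tprod n1 n (ttrans n (blockslice s A i)) (blockslice s A j))"
    have "finite {?f i j | i j. i < m \<and> j < m}" by (rule finite_image_set2) auto
    then have "finite {?f i j | i j. i < m \<and> j < m \<and> i \<noteq> j}" by (rule finite_subset[rotated]) blast
    then show ?thesis unfolding \<mu>_def mu_def MM_def m_def[symmetric] using that
      by (intro Max_ge) auto
  qed
  have tn: "0 \<le> topnorm n2 n2 n C" for C using topnorm_nonneg n2 n0 by blast
  have k0: "0 \<le> \<kappa>" using kap[OF m0] tn[of "M0 0"] by linarith
  have mu0: "0 \<le> \<mu>" using mub[of 0 1] m2 tn[of "MM 0 1"] by linarith
  have enn: "0 \<le> e t" for t unfolding e_def by (rule tfrob_nonneg)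
  have X0: "X 0 = (\<lambda>i j k. 0)" unfolding X_def by simp
  have key: "e (Suc t) \<le> \<kappa> * e t + (\<alpha> * \<mu>) * (\<Sum>j\<in>{1..<m}. e (t - j))" for t
  proof -
    define c where "c = t mod m"
    define sg where "sg j = nat ((int t - int j) mod int m)" for j
    define T where "T = ttrans n (blockslice s A c)"
    define R where "R = (\<lambda>a b k. B a b k - (\<Sum>j<m. if j \<le> t then
                 tprod n2 n (blockslice s A (sg j)) (X (t - j)) a b k else 0))"
    have c_lt: "c < m" unfolding c_def using m0 by simp
    have sg_lt: "sg j < m" for j unfolding sg_def using m0 by (simp add: cyc_lt)
    have sg0: "sg 0 = c" unfolding sg_def c_def by (simp flip: of_nat_mod)
    have Xsuc: "X (Suc t) = (\<lambda>a b k. X t a b k + \<alpha> * tprod n1 n T R a b k)"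
      unfolding X_def T_def R_def sg_def c_def m_def by (simp add: Let_def)
    have Ra: "R a b k = - (\<Sum>j<m. tprod n2 n (blockslice s A (sg j)) (E (t - j)) a b k)"
      if ab: "a < n1" "b < n3" "k < n" for a b k
    proof -
      have g: "(if j \<le> t then tprod n2 n (blockslice s A (sg j)) (X (t - j)) a b k else 0)
             = tprod n2 n (blockslice s A (sg j)) (X (t - j)) a b k" for j
        using X0 by (cases "j \<le> t") (auto simp: tprod_zero2)
      have "B a b k = tprod n2 n A Xs a b k" using sol ab by simp
      also have "\<dots> = (\<Sum>i<m. tprod n2 n (blockslice s A i) Xs a b k)"
        by (rule tprod_blk[OF s0 nm n0])
      also have "\<dots> = (\<Sum>j<m. tprod n2 n (blockslice s A (sg j)) Xs a b k)"
        unfolding sg_def by (rule perm_sum[OF m0, symmetric])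
      finally have "R a b k = (\<Sum>j<m. tprod n2 n (blockslice s A (sg j)) Xs a b k)
                    - (\<Sum>j<m. tprod n2 n (blockslice s A (sg j)) (X (t - j)) a b k)"
        unfolding R_def g by simp
      also have "\<dots> = - (\<Sum>j<m. tprod n2 n (blockslice s A (sg j)) (E (t - j)) a b k)"
        unfolding E_def tprod_diff2 by (simp add: sum_subtractf)
      finally show ?thesis .
    qed
    define G where "G j = tprod n2 n (MM c (sg j)) (E (t - j))" for j
    have Eeq: "E (Suc t) i b k = tprod n2 n (M0 c) (E t) i b k - \<alpha> * (\<Sum>j\<in>{1..<m}. G j i b k)"
      if ib: "i < n2" "b < n3" "k < n" for i b k
    proof -
      have "tprod n1 n T R i b k
          = tprod n1 n T (\<lambda>a b k. (-1) * (\<Sum>j<m. tprod n2 n (blockslice s A (sg j)) (E (t - j)) a b k)) i b k"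
        using ib Ra by (intro tprod_cong2) auto
      also have "\<dots> = - (\<Sum>j<m. tprod n1 n T (tprod n2 n (blockslice s A (sg j)) (E (t - j))) i b k)"
        unfolding tprod_scale2 tprod_sum2 by simp
      also have "\<dots> = - (\<Sum>j<m. G j i b k)"
        unfolding G_def MM_def T_def using n0 by (simp add: tprod_assoc)
      also have "\<dots> = - (G 0 i b k + (\<Sum>j\<in>{1..<m}. G j i b k))"
      proof -
        have "{..<m} = insert 0 {1..<m}" using m0 by auto
        then show ?thesis by simp
      qed
      finally have tr: "tprod n1 n T R i b k = - (G 0 i b k + (\<Sum>j\<in>{1..<m}. G j i b k))" .
      have h1: "tprod n2 n (M0 c) (E t) i b k = E t i b k - \<alpha> * G 0 i b k"
        unfolding M0_def G_def MM_def tprod_diff1 sg0 using ib by (simp add: tprod_ident)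
      have h2: "E (Suc t) i b k = E t i b k + \<alpha> * tprod n1 n T R i b k"
        unfolding E_def Xsuc by simp
      have h3: "\<alpha> * tprod n1 n T R i b k = - (\<alpha> * G 0 i b k) - \<alpha> * (\<Sum>j\<in>{1..<m}. G j i b k)"
        unfolding tr by (simp add: algebra_simps)
      show ?thesis unfolding h1 h2 h3 by (simp add: algebra_simps)
    qed
    have "e (Suc t) = tfrob n2 n3 n (\<lambda>i b k. tprod n2 n (M0 c) (E t) i b k - \<alpha> * (\<Sum>j\<in>{1..<m}. G j i b k))"
      unfolding e_def using Eeq by (intro tfrob_cong) auto
    also have "\<dots> \<le> tfrob n2 n3 n (tprod n2 n (M0 c) (E t)) + tfrob n2 n3 n (\<lambda>i b k. \<alpha> * (\<Sum>j\<in>{1..<m}. G j i b k))"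
      by (rule tfrob_diff)
    also have "\<dots> = tfrob n2 n3 n (tprod n2 n (M0 c) (E t)) + \<alpha> * tfrob n2 n3 n (\<lambda>i b k. \<Sum>j\<in>{1..<m}. G j i b k)"
      using assms(7) by (simp add: tfrob_scale)
    also have "\<dots> \<le> topnorm n2 n2 n (M0 c) * e t + \<alpha> * (\<Sum>j\<in>{1..<m}. tfrob n2 n3 n (G j))"
      unfolding e_def using assms(7)
      by (intro add_mono op_bound tn mult_left_mono tfrob_sum) auto
    also have "\<dots> \<le> \<kappa> * e t + \<alpha> * (\<Sum>j\<in>{1..<m}. \<mu> * e (t - j))"
    proof (intro add_mono mult_left_mono mult_right_mono kap c_lt enn sum_mono)
      fix j assume j: "j \<in> {1..<m}"
      have "tfrob n2 n3 n (G j) \<le> topnorm n2 n2 n (MM c (sg j)) * e (t - j)"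
        unfolding G_def e_def by (intro op_bound tn)
      also have "\<dots> \<le> \<mu> * e (t - j)"
        using j sg_ne[of j m t] c_lt sg_lt unfolding sg_def[symmetric] c_def[symmetric]
        by (intro mult_right_mono mub enn) auto
      finally show "tfrob n2 n3 n (G j) \<le> \<mu> * e (t - j)" .
    qed (use assms(7) in auto)
    also have "\<dots> = \<kappa> * e t + (\<alpha> * \<mu>) * (\<Sum>j\<in>{1..<m}. e (t - j))"
      by (simp add: sum_distrib_left mult.assoc)
    finally show ?thesis .
  qed
  have "e \<longlonglongrightarrow> 0"
    using assms(8) unfolding \<kappa>_def[symmetric] \<mu>_def[symmetric] m_def[symmetric]
    by (intro decay[OF enn key k0 _ _ m0]) (use assms(7) mu0 in auto)
  then have "(\<lambda>t. (e t)\<^sup>2) \<longlonglongrightarrow> 0\<^sup>2" by (intro tendsto_power)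
  then show ?thesis unfolding e_def E_def X_def by simp
qed

end
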